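(* Let $T$ be a string of length $n$ and $1<i\le j\le n$. For each $[s,t]\in\mathsf{MUS}(T[i-1..j])$ with $s\ne i-1$, if $[s,t]\notin\mathsf{MUS}(T[i..j])$ then $\#\mathit{occ}_{T[i-1..j]}(\mathit{sqp}_{i-1,j})=2$ and $\mathit{sqp}_{i-1,j}$ is a proper substring of $T[s..t]$.
   Context: $T[a..b]$ denotes the substring of $T$ from position $a$ to $b$. For strings $S,w$, $\#\mathit{occ}_S(w)$ is the number of positions at which $w$ occurs in $S$, with $\#\mathit{occ}_S(\varepsilon)=|S|+1$. A substring $w$ of $S$ is unique in $S$ if $\#\mathit{occ}_S(w)=1$ and repeating if $\#\mathit{occ}_S(w)\ge 2$. For $1\le i\le j\le n$, $\mathsf{MUS}(T[i..j])$ is the set of intervals $[s,t]$ (positions in $T$) with $i\le s\le t\le j$ such that $T[s..t]$ is unique in $T[i..j]$ and every proper substring of $T[s..t]$ (including the empty string) is repeating in $T[i..j]$. $\mathit{sqp}_{i,j}$ is the shortest (non-empty) prefix of $T[i..j]$ that occurs at most twice in $T[i..j]$. *)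

theory Defs
  imports Main
begin

text \<open>Strings are lists; positions are 1-based. substr T a b is T[a..b].\<close>
definition substr :: "'a list \<Rightarrow> nat \<Rightarrow> nat \<Rightarrow> 'a list" where
  "substr T a b = take (Suc b - a) (drop (a - 1) T)"

text \<open>Number of occurrences of w in S (occ S [] = length S + 1).\<close>
definition occ :: "'a list \<Rightarrow> 'a list \<Rightarrow> nat" where
  "occ S w = card {k. k + length w \<le> length S \<and> take (length w) (drop k S) = w}"

definition is_substring :: "'a list \<Rightarrow> 'a list \<Rightarrow> bool" where
  "is_substring x w \<longleftrightarrow> (\<exists>u v. w = u @ x @ v)"

definition proper_substring :: "'a list \<Rightarrow> 'a list \<Rightarrow> bool" where
  "proper_substring x w \<longleftrightarrow> is_substring x w \<and> x \<noteq> w"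

definition unique_in :: "'a list \<Rightarrow> 'a list \<Rightarrow> bool" where
  "unique_in w S \<longleftrightarrow> occ S w = 1"

definition repeating_in :: "'a list \<Rightarrow> 'a list \<Rightarrow> bool" where
  "repeating_in w S \<longleftrightarrow> occ S w \<ge> 2"

text \<open>MUS(T[i..j]) as a set of intervals (s,t) of positions in T.\<close>
definition MUS :: "'a list \<Rightarrow> nat \<Rightarrow> nat \<Rightarrow> (nat \<times> nat) set" where
  "MUS T i j = {(s, t). i \<le> s \<and> s \<le> t \<and> t \<le> j
      \<and> unique_in (substr T s t) (substr T i j)
      \<and> (\<forall>x. proper_substring x (substr T s t) \<longrightarrow> repeating_in x (substr T i j))}"

definition sqp :: "'a list \<Rightarrow> nat \<Rightarrow> nat \<Rightarrow> 'a list" where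
  "sqp T i j = take (LEAST k. 1 \<le> k \<and> occ (substr T i j) (take k (substr T i j)) \<le> 2)
                    (substr T i j)"

end

theory Submission
  imports Defs
begin

lemma occ_Cons:
  "occ (a#S) w = occ S w + (if take (length w) (a#S) = w then 1 else 0)"
proof -
  let ?n = "length w"
  let ?A = "{k. k + ?n \<le> length S \<and> take ?n (drop k S) = w}"
  let ?B = "{k. k + ?n \<le> length (a#S) \<and> take ?n (drop k (a#S)) = w}"
  let ?Z = "(if take ?n (a#S) = w then {0::nat} else {})"
  have eq: "?B = ?Z \<union> Suc ` ?A"
  proof (rule set_eqI)
    fix k show "k \<in> ?B \<longleftrightarrow> k \<in> ?Z \<union> Suc ` ?A"
    proof (cases k)
      case 0 then show ?thesis
        by (auto dest: arg_cong[of _ _ length])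
    next
      case (Suc m) then show ?thesis by auto
    qed
  qed
  have fin: "finite ?A" by (rule finite_subset[of _ "{..length S}"]) auto
  have "card ?B = card ?Z + card (Suc ` ?A)"
    unfolding eq by (rule card_Un_disjoint) (use fin in auto)
  also have "card (Suc ` ?A) = card ?A" by (rule card_image) auto
  finally show ?thesis unfolding occ_def by auto
qed

lemma occ_mono:
  assumes "take (length u) x = u"
  shows "occ S x \<le> occ S u"
proof -
  have lu: "length u \<le> length x" using assms
    by (metis length_take min.cobounded1)
  show ?thesis unfolding occ_def
  proof (rule card_mono)
    show "finite {k. k + length u \<le> length S \<and> take (length u) (drop k S) = u}"
      by (rule finite_subset[of _ "{..length S}"]) auto
    show "{k. k + length x \<le> length S \<and> take (length x) (drop k S) = x}
      \<subseteq> {k. k + length u \<le> length S \<and> take (length u) (drop k S) = u}"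
    proof
      fix k assume "k \<in> {k. k + length x \<le> length S \<and> take (length x) (drop k S) = x}"
      then have h: "k + length x \<le> length S" "take (length x) (drop k S) = x" by auto
      have "take (length u) (drop k S) = take (length u) (take (length x) (drop k S))"
        using lu by (simp add: min_absorb1)
      also have "\<dots> = u" using h(2) assms by simp
      finally show "k \<in> {k. k + length u \<le> length S \<and> take (length u) (drop k S) = u}"
        using h(1) lu by auto
    qed
  qed
qed

lemma occ_Nil: "occ S [] = Suc (length S)"
  unfolding occ_def by simp

lemma abstract:
  assumes Sne: "S \<noteq> []"
    and ex: "\<exists>x. proper_substring x w \<and> occ S x < 2"
    and rep: "\<forall>x. proper_substring x w \<longrightarrow> occ (a#S) x \<ge> 2"
  shows "occ (a#S) (take (LEAST k. 1 \<le> k \<and> occ (a#S) (take k (a#S)) \<le> 2) (a#S)) = 2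
       \<and> proper_substring (take (LEAST k. 1 \<le> k \<and> occ (a#S) (take k (a#S)) \<le> 2) (a#S)) w"
proof -
  obtain x where px: "proper_substring x w" and ox: "occ S x < 2" using ex by blast
  have x2: "occ (a#S) x \<ge> 2" using rep px by blast
  have "x \<noteq> []" using ox Sne occ_Nil[of S] by (cases S) auto
  have pre: "take (length x) (a#S) = x" and o2: "occ (a#S) x = 2"
    using x2 ox occ_Cons[of a S x] by (auto split: if_splits)
  define L where "L = (LEAST k. 1 \<le> k \<and> occ (a#S) (take k (a#S)) \<le> 2)"
  have P: "1 \<le> length x \<and> occ (a#S) (take (length x) (a#S)) \<le> 2"
    using \<open>x \<noteq> []\<close> pre o2 by (cases x) auto
  have Lle: "L \<le> length x" unfolding L_def by (rule Least_le) (rule P)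
  have PL: "1 \<le> L \<and> occ (a#S) (take L (a#S)) \<le> 2" unfolding L_def by (rule LeastI) (rule P)
  have tx: "take L (a#S) = take L x"
    using Lle pre by (metis min.absorb1 take_take)
  have "occ (a#S) x \<le> occ (a#S) (take L x)"
    by (rule occ_mono) (use Lle in \<open>simp add: min_absorb1\<close>)
  with PL o2 tx have c1: "occ (a#S) (take L (a#S)) = 2" by simp
  from px obtain u v where w: "w = u @ x @ v" and xw: "x \<noteq> w"
    unfolding proper_substring_def is_substring_def by blast
  have "length x < length w" using w xw by (cases u; cases v) auto
  then have "take L x \<noteq> w" using Lle by auto
  moreover have "w = u @ take L x @ (drop L x @ v)" using w by simp
  ultimately have "proper_substring (take L x) w"
    unfolding proper_substring_def is_substring_def by blast
  with c1 tx show ?thesis unfolding L_def by simp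
qed

theorem lemma18:
  fixes T :: "'a list" and i j s t :: nat
  assumes "1 < i" and "i \<le> j" and "j \<le> length T"
    and "(s, t) \<in> MUS T (i - 1) j" and "s \<noteq> i - 1"
    and "(s, t) \<notin> MUS T i j"
  shows "occ (substr T (i - 1) j) (sqp T (i - 1) j) = 2
       \<and> proper_substring (sqp T (i - 1) j) (substr T s t)"
proof -
  let ?S = "substr T i j"
  let ?a = "T ! (i - 2)"
  have S': "substr T (i - 1) j = ?a # ?S"
  proof -
    have d: "drop (i - 2) T = T ! (i - 2) # drop (i - 1) T"
    proof -
      have "i - 2 < length T" using assms(1-3) by simp
      moreover have "Suc (i - 2) = i - 1" using assms(1) by simp
      ultimately show ?thesis by (metis Cons_nth_drop_Suc)
    qed
    have "Suc j - (i - 1) = Suc (Suc j - i)" using assms(1,2) by simp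
    then show ?thesis unfolding substr_def using d by (simp add: numeral_2_eq_2)
  qed
  have Sne: "?S \<noteq> []" using assms(1-3) unfolding substr_def by simp
  from assms(4) have m: "i - 1 \<le> s" "s \<le> t" "t \<le> j"
    and u: "unique_in (substr T s t) (substr T (i - 1) j)"
    and r: "\<forall>x. proper_substring x (substr T s t) \<longrightarrow> repeating_in x (substr T (i - 1) j)"
    unfolding MUS_def by auto
  have si: "i \<le> s" using m(1) assms(5) by simp
  have occS: "occ ?S (substr T s t) \<ge> 1"
  proof -
    let ?w = "substr T s t"
    have lw: "length ?w = Suc t - s" using m assms(3) si assms(1) unfolding substr_def by auto
    have "take (length ?w) (drop (s - i) ?S) = ?w"
    proof -
      have "drop (s - i) ?S = take (Suc j - s) (drop (s - 1) T)"
      proof -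
        have "drop (s - i) (drop (i - 1) T) = drop (s - 1) T" using si assms(1) by simp
        moreover have "Suc j - i - (s - i) = Suc j - s" using si m by simp
        ultimately show ?thesis by (simp add: drop_take substr_def)
      qed
      then show ?thesis using lw m unfolding substr_def by (simp add: min_absorb1)
    qed
    moreover have "s - i + length ?w \<le> length ?S"
      using lw m si assms(1-3) unfolding substr_def by auto
    ultimately have "s - i \<in> {k. k + length ?w \<le> length ?S \<and> take (length ?w) (drop k ?S) = ?w}"
      by simp
    then show ?thesis unfolding occ_def
    proof -
      have fin: "finite {k. k + length ?w \<le> length ?S \<and> take (length ?w) (drop k ?S) = ?w}"
        by (rule finite_subset[of _ "{..length ?S}"]) auto
      show "1 \<le> card {k. k + length ?w \<le> length ?S \<and> take (length ?w) (drop k ?S) = ?w}"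
        using fin \<open>s - i \<in> _\<close> card_gt_0_iff by (metis One_nat_def Suc_leI empty_iff)
    qed
  qed
  have uS: "unique_in (substr T s t) ?S"
    using u occS occ_Cons[of ?a ?S "substr T s t"] unfolding unique_in_def S' by auto
  have ex: "\<exists>x. proper_substring x (substr T s t) \<and> occ ?S x < 2"
    using assms(6) uS si m unfolding MUS_def repeating_in_def by auto
  have rep: "\<forall>x. proper_substring x (substr T s t) \<longrightarrow> occ (?a # ?S) x \<ge> 2"
    using r unfolding repeating_in_def S' by blast
  show ?thesis unfolding sqp_def S' using abstract[OF Sne ex rep] .
qed

end
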